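(* Let $A=[a_{ij}]\in M_{m,n}(\mathbb{R})$ have rank $r\geq 1$ and be properly arranged. Then $A$ is diagonally eliminable up to $r$. Moreover, $|a^{(2k)}_{k+1,k+1}|\geq |a^{(2k)}_{ij}|$ for all $k$ with $0\leq k<r$ and all $i,j$ with $k+1\leq i\leq m$, $k+1\leq j\leq n$.
   Context: Gauss-Jordan procedure: for $A\in M_{m,n}(\mathbb{R})$ set $A^{(0)}=A$. For $k\geq 0$, if $A^{(2k)}=[a^{(2k)}_{ij}]$ is defined and $a^{(2k)}_{k+1,k+1}\neq 0$, let $\mathcal{G}_{2k+1}$ be the $m\times m$ diagonal matrix with all diagonal entries $1$ except the $(k+1,k+1)$ entry, which is $1/a^{(2k)}_{k+1,k+1}$, and set $A^{(2k+1)}=\mathcal{G}_{2k+1}A^{(2k)}=[a^{(2k+1)}_{ij}]$; then let $\mathcal{G}_{2k+2}=[g_{ij}]_{m\times m}$ with $g_{ii}=1$, $g_{i,k+1}=-a^{(2k+1)}_{i,k+1}$ for $i\neq k+1$, and all other entries $0$, and set $A^{(2k+2)}=\mathcal{G}_{2k+2}A^{(2k+1)}$. A matrix $A$ of rank $r\geq 1$ is diagonally eliminable up to $r$ if for each $k=1,\dots,r$ the matrix $A^{(2k-2)}$ is defined and $a^{(2k-2)}_{kk}\neq 0$. Minors: $m^{i_1\dots i_p}_{j_1\dots j_p}$ (increasing indices) is the determinant of the submatrix of $A$ with rows $i_1,\dots,i_p$ and columns $j_1,\dots,j_p$; $m_k=m^{1\dots k}_{1\dots k}$. $A$ (of rank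 $r\geq 1$) is properly arranged if $|a_{ij}|\leq|a_{11}|$ for all $1\leq i\leq m$, $1\leq j\leq n$, and for every integer $k$ with $1\leq k<\min\{m,n\}$ one has $|m^{1\dots k\,i}_{1\dots k\,j}|\leq|m_{k+1}|$ for all $k+1\leq i\leq m$, $k+1\leq j\leq n$. *)

theory Defs
  imports "Jordan_Normal_Form.DL_Rank_Submatrix"
begin

text \<open>Matrices are Jordan_Normal_Form matrices with 0-based indices: the paper's
  entry a_{ij} (1-based) is A $$ (i-1, j-1).\<close>

definition mrank :: "real mat \<Rightarrow> nat" where
  "mrank A = vec_space.rank (dim_row A) A"

definition gj_G_odd :: "nat \<Rightarrow> real mat \<Rightarrow> real mat" where
  "gj_G_odd k B = mat (dim_row B) (dim_row B)
     (\<lambda>(i,j). if i = j then (if i = k then 1 / B $$ (k,k) else 1) else 0)"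

definition gj_G_even :: "nat \<Rightarrow> real mat \<Rightarrow> real mat" where
  "gj_G_even k B = mat (dim_row B) (dim_row B)
     (\<lambda>(i,j). if i = j then 1 else if j = k then - B $$ (i,k) else 0)"

text \<open>gj A t = A^{(t)} (computed totally; it is the paper's A^{(t)} whenever that is
  defined, i.e. whenever all earlier pivots are nonzero).\<close>
fun gj :: "real mat \<Rightarrow> nat \<Rightarrow> real mat" where
  "gj A 0 = A"
| "gj A (Suc t) = (let B = gj A t; k = t div 2 in
      if even t then gj_G_odd k B * B else gj_G_even k B * B)"

text \<open>Diagonally eliminable up to r: for k = 1..r, a^{(2k-2)}_{kk} \<noteq> 0.
  (Definedness of A^{(2k-2)} follows from the conditions for smaller k.)\<close>
definition diag_eliminable :: "real mat \<Rightarrow> nat \<Rightarrow> bool" where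
  "diag_eliminable A r \<longleftrightarrow> (\<forall>k\<in>{1..r}. gj A (2*k - 2) $$ (k - 1, k - 1) \<noteq> 0)"

definition minor :: "real mat \<Rightarrow> nat set \<Rightarrow> nat set \<Rightarrow> real" where
  "minor A I J = det (submatrix A I J)"

definition lead_minor :: "real mat \<Rightarrow> nat \<Rightarrow> real" where
  "lead_minor A k = minor A {0..<k} {0..<k}"

definition properly_arranged :: "real mat \<Rightarrow> bool" where
  "properly_arranged A \<longleftrightarrow>
     (\<forall>i<dim_row A. \<forall>j<dim_col A. \<bar>A $$ (i,j)\<bar> \<le> \<bar>A $$ (0,0)\<bar>) \<and>
     (\<forall>k. 1 \<le> k \<and> k < min (dim_row A) (dim_col A) \<longrightarrow>
        (\<forall>i j. k \<le> i \<and> i < dim_row A \<and> k \<le> j \<and> j < dim_col A \<longrightarrow>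
           \<bar>minor A ({0..<k} \<union> {i}) ({0..<k} \<union> {j})\<bar> \<le> \<bar>lead_minor A (k+1)\<bar>))"

end

theory Submission
  imports Defs
begin


lemma G_odd_mult:
  assumes "dim_row X = dim_row B" "i < dim_row B" "j < dim_col X"
  shows "(gj_G_odd k B * X) $$ (i,j) = (if i = k then X $$ (k,j) / B $$ (k,k) else X $$ (i,j))"
proof -
  let ?c = "(if i = k then 1 / B $$ (k,k) else 1)"
  have d: "dim_row (gj_G_odd k B) = dim_row B" "dim_col (gj_G_odd k B) = dim_row B"
    by (simp_all add: gj_G_odd_def)
  have "(gj_G_odd k B * X) $$ (i,j) = row (gj_G_odd k B) i \<bullet> col X j"
    using assms d by (simp add: index_mult_mat)
  also have "\<dots> = (\<Sum>l\<in>{0..<dim_row B}. row (gj_G_odd k B) i $ l * col X j $ l)"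
    using assms by (simp add: scalar_prod_def)
  also have "\<dots> = (\<Sum>l\<in>{0..<dim_row B}. (if l = i then ?c * X $$ (l,j) else 0))"
    by (rule sum.cong, simp) (use assms in \<open>auto simp: gj_G_odd_def\<close>)
  also have "\<dots> = ?c * X $$ (i,j)"
    using assms by simp
  finally show ?thesis by simp
qed

lemma G_even_mult:
  assumes "dim_row X = dim_row B" "i < dim_row B" "j < dim_col X" "k < dim_row B"
  shows "(gj_G_even k B * X) $$ (i,j) = (if i = k then X $$ (k,j) else X $$ (i,j) - B $$ (i,k) * X $$ (k,j))"
proof -
  have d: "dim_row (gj_G_even k B) = dim_row B" "dim_col (gj_G_even k B) = dim_row B"
    by (simp_all add: gj_G_even_def)
  have "(gj_G_even k B * X) $$ (i,j) = row (gj_G_even k B) i \<bullet> col X j"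
    using assms d by (simp add: index_mult_mat)
  also have "\<dots> = (\<Sum>l\<in>{0..<dim_row B}. row (gj_G_even k B) i $ l * col X j $ l)"
    using assms by (simp add: scalar_prod_def)
  also have "\<dots> = (\<Sum>l\<in>{0..<dim_row B}. (if l = i then X $$ (l,j) else 0)) +
     (\<Sum>l\<in>{0..<dim_row B}. (if l = k then (if i = k then 0 else - B $$ (i,k) * X $$ (l,j)) else 0))"
    unfolding sum.distrib[symmetric]
    by (rule sum.cong, simp) (use assms in \<open>simp add: gj_G_even_def\<close>)
  also have "\<dots> = X $$ (i,j) + (if i = k then 0 else - B $$ (i,k) * X $$ (k,j))"
    using assms by simp
  finally show ?thesis by simp
qed

lemma gj_dims: "dim_row (gj A t) = dim_row A \<and> dim_col (gj A t) = dim_col A"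
  by (induction t) (auto simp: Let_def gj_G_odd_def gj_G_even_def)

lemma gj_carrier: "A \<in> carrier_mat m n \<Longrightarrow> gj A t \<in> carrier_mat m n"
  using gj_dims[of A t] unfolding carrier_mat_def by simp

lemma gj_two_steps:
  "gj A (2 * Suc k) = (let B' = gj_G_odd k (gj A (2*k)) * gj A (2*k) in gj_G_even k B' * B')"
proof -
  have "2 * Suc k = Suc (Suc (2*k))" by simp
  have a: "gj A (Suc (2*k)) = gj_G_odd k (gj A (2*k)) * gj A (2*k)"
    by (simp only: gj.simps Let_def) simp
  have b: "gj A (Suc (Suc (2*k))) = gj_G_even k (gj A (Suc (2*k))) * gj A (Suc (2*k))"
    by (simp only: gj.simps(2)[of A "Suc (2*k)"] Let_def) simp
  show ?thesis unfolding Let_def \<open>2 * Suc k = Suc (Suc (2*k))\<close> b a ..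
qed

definition inv_E :: "real mat \<Rightarrow> nat \<Rightarrow> nat \<Rightarrow> real mat \<Rightarrow> bool" where
  "inv_E A m k E \<longleftrightarrow> E \<in> carrier_mat m m \<and> gj A (2*k) = E * A \<and>
     (\<forall>i<m. \<forall>l<m. k \<le> l \<longrightarrow> E $$ (i,l) = (if i = l then 1 else 0)) \<and>
     (\<forall>i<m. \<forall>j<k. gj A (2*k) $$ (i,j) = (if i = j then 1 else 0))"

lemma inv_E_0: "A \<in> carrier_mat m n \<Longrightarrow> inv_E A m 0 (1\<^sub>m m)"
  unfolding inv_E_def by (simp add: left_mult_one_mat)


lemma inv_E_step:
  assumes A: "A \<in> carrier_mat m n" and km: "k < m" and kn: "k < n"
    and inv: "inv_E A m k E" and p: "gj A (2*k) $$ (k,k) \<noteq> 0"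
  shows "\<exists>E'. inv_E A m (Suc k) E'"
proof -
  define B where "B = gj A (2*k)"
  define Go where "Go = gj_G_odd k B"
  define B' where "B' = Go * B"
  define Ge where "Ge = gj_G_even k B'"
  have E: "E \<in> carrier_mat m m" and BE: "B = E * A"
    and Ecol: "\<And>i l. i < m \<Longrightarrow> l < m \<Longrightarrow> k \<le> l \<Longrightarrow> E $$ (i,l) = (if i = l then 1 else 0)"
    and Bcol: "\<And>i j. i < m \<Longrightarrow> j < k \<Longrightarrow> B $$ (i,j) = (if i = j then 1 else 0)"
    using inv unfolding inv_E_def B_def by auto
  have Bc: "B \<in> carrier_mat m n" unfolding B_def using gj_carrier[OF A] .
  have Goc: "Go \<in> carrier_mat m m" using Bc unfolding Go_def gj_G_odd_def by auto
  have B'c: "B' \<in> carrier_mat m n" unfolding B'_def using Goc Bc by auto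
  have Gec: "Ge \<in> carrier_mat m m" using B'c unfolding Ge_def gj_G_even_def by auto
  have gjS: "gj A (2 * Suc k) = Ge * B'"
    unfolding gj_two_steps Let_def Ge_def B'_def Go_def B_def ..
  have B'e: "B' $$ (i,j) = (if i = k then B $$ (k,j) / B $$ (k,k) else B $$ (i,j))" if "i < m" "j < n" for i j
    unfolding B'_def Go_def by (rule G_odd_mult) (use Bc that in auto)
  have B''e: "(Ge * B') $$ (i,j) = (if i = k then B' $$ (k,j) else B' $$ (i,j) - B' $$ (i,k) * B' $$ (k,j))"
    if "i < m" "j < n" for i j
    unfolding Ge_def by (rule G_even_mult) (use B'c that km in auto)
  define E' where "E' = Ge * (Go * E)"
  have GoEe: "(Go * E) $$ (i,l) = (if i = k then E $$ (k,l) / B $$ (k,k) else E $$ (i,l))" if "i < m" "l < m" for i l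
    unfolding Go_def by (rule G_odd_mult) (use Bc E that in auto)
  have E'e: "E' $$ (i,l) = (if i = k then (Go * E) $$ (k,l) else (Go * E) $$ (i,l) - B' $$ (i,k) * (Go * E) $$ (k,l))"
    if "i < m" "l < m" for i l
    unfolding E'_def Ge_def by (rule G_even_mult) (use B'c Goc E that km in auto)
  have E'c: "E' \<in> carrier_mat m m" unfolding E'_def using Gec Goc E by auto
  have eq: "gj A (2 * Suc k) = E' * A"
  proof -
    have GoE: "Go * E \<in> carrier_mat m m" using Goc E by simp
    have "Go * (E * A) = (Go * E) * A" using Goc E A by simp
    moreover have "Ge * ((Go * E) * A) = (Ge * (Go * E)) * A"
      using assoc_mult_mat[OF Gec GoE A] by simp
    ultimately show ?thesis unfolding gjS E'_def B'_def BE by simp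
  qed
  have c1: "E' $$ (i,l) = (if i = l then 1 else 0)" if "i < m" "l < m" "Suc k \<le> l" for i l
  proof -
    have "E $$ (k,l) = 0" using Ecol[of k l] that km by auto
    then have "(Go * E) $$ (k,l) = 0" using GoEe[of k l] that km by simp
    then show ?thesis using E'e[OF that(1,2)] GoEe[OF that(1,2)] Ecol[OF that(1,2)] that by auto
  qed
  have c2: "gj A (2 * Suc k) $$ (i,j) = (if i = j then 1 else 0)" if "i < m" "j < Suc k" for i j
  proof (cases "j < k")
    case True
    have jn: "j < n" using True kn by auto
    have "B $$ (k,j) = 0" using Bcol[OF km True] True by auto
    then have "B' $$ (k,j) = 0" using B'e[OF km jn] by simp
    then show ?thesis unfolding gjS using B''e[OF that(1) jn] B'e[OF that(1) jn] Bcol[OF that(1) True] by auto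
  next
    case False
    then have j: "j = k" using that by auto
    have "B' $$ (k,k) = 1" using B'e[OF km kn] p unfolding B_def by simp
    then show ?thesis unfolding gjS j using B''e[OF that(1) kn] by auto
  qed
  show ?thesis unfolding inv_E_def using E'c eq c1 c2 by blast
qed

lemma inv_E_exists:
  assumes A: "A \<in> carrier_mat m n"
  shows "k \<le> m \<Longrightarrow> k \<le> n \<Longrightarrow> (\<forall>t<k. gj A (2*t) $$ (t,t) \<noteq> 0) \<Longrightarrow> \<exists>E. inv_E A m k E"
proof (induction k)
  case 0
  then show ?case using inv_E_0[OF A] by blast
next
  case (Suc k)
  then obtain E where "inv_E A m k E" by auto
  then show ?case using inv_E_step[OF A, of k E] Suc.prems by auto
qed



lemma pick_lt: "l < k \<Longrightarrow> pick ({0..<k} \<union> X) l = l"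
proof (induction l)
  case 0
  then show ?case by (simp add: Least_eq_0)
next
  case (Suc l)
  then have "pick ({0..<k} \<union> X) l = l" by simp
  then show ?case using Suc.prems by (auto intro!: Least_equality)
qed

lemma pick_k: assumes ki: "k \<le> i" shows "pick ({0..<k} \<union> {i}) k = i"
proof (cases k)
  case 0
  then show ?thesis by (auto intro: Least_equality)
next
  case (Suc k')
  then have "pick ({0..<k} \<union> {i}) k' = k'" using pick_lt[of k' k "{i}"] by simp
  then show ?thesis using Suc ki by (auto intro!: Least_equality)
qed

definition sg :: "nat \<Rightarrow> nat \<Rightarrow> nat \<Rightarrow> nat" where
  "sg k i a = (if a < k then a else i)"

lemma pick_sg: "k \<le> i \<Longrightarrow> a < Suc k \<Longrightarrow> pick ({0..<k} \<union> {i}) a = sg k i a"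
proof (cases "a < k")
  case True
  then show ?thesis unfolding sg_def using pick_lt[of a k "{i}"] by simp
next
  case False
  assume "a < Suc k" "k \<le> i"
  then have "a = k" using False by simp
  then show ?thesis unfolding sg_def using pick_k[of k i] \<open>k \<le> i\<close> by simp
qed

lemma pick_sg': "k \<le> i \<Longrightarrow> a < Suc k \<Longrightarrow> pick (insert i {0..<k}) a = sg k i a"
  using pick_sg by simp

lemma card_S: "k \<le> i \<Longrightarrow> i < N \<Longrightarrow> card {x. x < N \<and> x \<in> {0..<k} \<union> {i}} = Suc k"
proof -
  assume a: "k \<le> i" "i < N"
  then have "{x. x < N \<and> x \<in> {0..<k} \<union> {i}} = insert i {0..<k}" by auto
  then show ?thesis using a by simp
qed

lemma card_K: "k \<le> N \<Longrightarrow> card {x. x < N \<and> x \<in> {0..<k}} = k"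
proof -
  assume a: "k \<le> N"
  then have "{x. x < N \<and> x \<in> {0..<k}} = {0..<k}" by auto
  then show ?thesis by simp
qed

lemma sub_S:
  assumes "k \<le> i" "i < dim_row A" "k \<le> j" "j < dim_col A"
  shows "submatrix A ({0..<k} \<union> {i}) ({0..<k} \<union> {j}) =
    mat (Suc k) (Suc k) (\<lambda>(a,b). A $$ (sg k i a, sg k j b))"
  unfolding submatrix_def card_S[OF assms(1,2)] card_S[OF assms(3,4)]
  by (rule eq_matI) (auto simp: pick_sg' assms)

lemma sub_K:
  assumes "k \<le> dim_row A" "k \<le> dim_col A"
  shows "submatrix A {0..<k} {0..<k} = mat k k (\<lambda>(a,b). A $$ (a, b))"
proof -
  have p: "pick {0..<k} a = a" if "a < k" for a using pick_lt[of a k "{}"] that by simp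
  show ?thesis
    unfolding submatrix_def card_K[OF assms(1)] card_K[OF assms(2)]
    by (rule eq_matI) (auto simp: p)
qed



lemma sub_prod:
  assumes E: "E \<in> carrier_mat m m" and A: "A \<in> carrier_mat m n"
    and Ecol: "\<And>i l. i < m \<Longrightarrow> l < m \<Longrightarrow> k \<le> l \<Longrightarrow> E $$ (i,l) = (if i = l then 1 else 0)"
    and bij: "bij_betw \<sigma> {..<s} S" and S: "S = {..<k} \<union> T" and T: "T \<subseteq> {k..<m}" and km: "k \<le> m"
    and tau: "\<And>b. b < s' \<Longrightarrow> \<tau> b < n"
  shows "mat s s' (\<lambda>(a,b). (E * A) $$ (\<sigma> a, \<tau> b)) =
    mat s s (\<lambda>(a,c). E $$ (\<sigma> a, \<sigma> c)) * mat s s' (\<lambda>(c,b). A $$ (\<sigma> c, \<tau> b))"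
proof (rule eq_matI)
  fix a b assume a: "a < dim_row (mat s s (\<lambda>(a,c). E $$ (\<sigma> a, \<sigma> c)) * mat s s' (\<lambda>(c,b). A $$ (\<sigma> c, \<tau> b)))"
    and b: "b < dim_col (mat s s (\<lambda>(a,c). E $$ (\<sigma> a, \<sigma> c)) * mat s s' (\<lambda>(c,b). A $$ (\<sigma> c, \<tau> b)))"
  then have a: "a < s" and b: "b < s'" by auto
  have Sm: "S \<subseteq> {..<m}" using S T km by auto
  have sa: "\<sigma> a \<in> S" using bij a unfolding bij_betw_def by auto
  then have sam: "\<sigma> a < m" using Sm by auto
  have tb: "\<tau> b < n" using tau b .
  have "(E * A) $$ (\<sigma> a, \<tau> b) = (\<Sum>l\<in>{0..<m}. E $$ (\<sigma> a, l) * A $$ (l, \<tau> b))"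
    using E A sam tb by (simp add: scalar_prod_def)
  also have "\<dots> = (\<Sum>l\<in>S. E $$ (\<sigma> a, l) * A $$ (l, \<tau> b))"
  proof (rule sum.mono_neutral_right)
    show "finite {0..<m}" by simp
    show "S \<subseteq> {0..<m}" using Sm by auto
    show "\<forall>l\<in>{0..<m} - S. E $$ (\<sigma> a, l) * A $$ (l, \<tau> b) = 0"
    proof
      fix l assume l: "l \<in> {0..<m} - S"
      then have "k \<le> l" "l < m" "l \<noteq> \<sigma> a" using S sa by auto
      then show "E $$ (\<sigma> a, l) * A $$ (l, \<tau> b) = 0" using Ecol[OF sam] by simp
    qed
  qed
  also have "\<dots> = (\<Sum>c\<in>{..<s}. E $$ (\<sigma> a, \<sigma> c) * A $$ (\<sigma> c, \<tau> b))"
    using sum.reindex_bij_betw[OF bij, of "\<lambda>l. E $$ (\<sigma> a, l) * A $$ (l, \<tau> b)"] by simp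
  also have "\<dots> = (mat s s (\<lambda>(a,c). E $$ (\<sigma> a, \<sigma> c)) * mat s s' (\<lambda>(c,b). A $$ (\<sigma> c, \<tau> b))) $$ (a,b)"
    using a b by (simp add: scalar_prod_def lessThan_atLeast0)
  finally show "mat s s' (\<lambda>(a,b). (E * A) $$ (\<sigma> a, \<tau> b)) $$ (a,b) =
    (mat s s (\<lambda>(a,c). E $$ (\<sigma> a, \<sigma> c)) * mat s s' (\<lambda>(c,b). A $$ (\<sigma> c, \<tau> b))) $$ (a,b)"
    using a b by simp
qed auto

lemma det_lastcol:
  assumes Q: "(Q :: real mat) \<in> carrier_mat (Suc k) (Suc k)" and z: "\<And>a. a < k \<Longrightarrow> Q $$ (a,k) = 0"
  shows "det Q = Q $$ (k,k) * det (mat k k (\<lambda>(a,b). Q $$ (a,b)))"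
proof -
  have "det Q = (\<Sum>i<Suc k. Q $$ (i,k) * cofactor Q i k)"
    by (rule laplace_expansion_column[OF Q]) simp
  also have "\<dots> = Q $$ (k,k) * cofactor Q k k"
    by (simp add: z)
  also have "mat_delete Q k k = mat k k (\<lambda>(a,b). Q $$ (a,b))"
    using Q by (intro eq_matI) (auto simp: mat_delete_def)
  then have "cofactor Q k k = det (mat k k (\<lambda>(a,b). Q $$ (a,b)))"
    unfolding cofactor_def by simp
  finally show ?thesis .
qed

lemma det_lastrow:
  assumes Q: "(Q :: real mat) \<in> carrier_mat (Suc k) (Suc k)" and z: "\<And>b. b < k \<Longrightarrow> Q $$ (k,b) = 0"
  shows "det Q = Q $$ (k,k) * det (mat k k (\<lambda>(a,b). Q $$ (a,b)))"
proof -
  have "det Q = (\<Sum>j<Suc k. Q $$ (k,j) * cofactor Q k j)"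
    by (rule laplace_expansion_row[OF Q]) simp
  also have "\<dots> = Q $$ (k,k) * cofactor Q k k"
    by (simp add: z)
  also have "mat_delete Q k k = mat k k (\<lambda>(a,b). Q $$ (a,b))"
    using Q by (intro eq_matI) (auto simp: mat_delete_def)
  then have "cofactor Q k k = det (mat k k (\<lambda>(a,b). Q $$ (a,b)))"
    unfolding cofactor_def by simp
  finally show ?thesis .
qed



lemma bij_sg: "k \<le> i \<Longrightarrow> bij_betw (sg k i) {..<Suc k} ({..<k} \<union> {i})"
  unfolding bij_betw_def inj_on_def sg_def
  by (auto simp: image_iff)

lemma minor_facts:
  assumes A: "A \<in> carrier_mat m n" and inv: "inv_E A m k E" and km: "k \<le> m" and kn: "k \<le> n"
  shows "det (mat k k (\<lambda>(a,b). E $$ (a,b))) * lead_minor A k = 1"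
    and "\<And>i j. k \<le> i \<Longrightarrow> i < m \<Longrightarrow> k \<le> j \<Longrightarrow> j < n \<Longrightarrow>
      gj A (2*k) $$ (i,j) = det (mat k k (\<lambda>(a,b). E $$ (a,b))) * minor A ({0..<k} \<union> {i}) ({0..<k} \<union> {j})"
proof -
  define B where "B = gj A (2*k)"
  define d where "d = det (mat k k (\<lambda>(a,b). E $$ (a,b)))"
  have E: "E \<in> carrier_mat m m" and BE: "B = E * A"
    and Ecol: "\<And>i l. i < m \<Longrightarrow> l < m \<Longrightarrow> k \<le> l \<Longrightarrow> E $$ (i,l) = (if i = l then 1 else 0)"
    and Bcol: "\<And>i j. i < m \<Longrightarrow> j < k \<Longrightarrow> B $$ (i,j) = (if i = j then 1 else 0)"
    using inv unfolding inv_E_def B_def by auto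
  have Bc: "B \<in> carrier_mat m n" unfolding B_def using gj_carrier[OF A] .
  have BK: "mat k k (\<lambda>(a,b). B $$ (a,b)) = 1\<^sub>m k"
    by (rule eq_matI) (use Bcol km in auto)
  have "submatrix B {0..<k} {0..<k} = mat k k (\<lambda>(a,b). B $$ (a,b))"
    using sub_K[of k B] Bc km kn by auto
  also have "\<dots> = mat k k (\<lambda>(a,b). (E * A) $$ (a,b))" unfolding BE ..
  also have "\<dots> = mat k k (\<lambda>(a,c). E $$ (a, c)) * mat k k (\<lambda>(c,b). A $$ (c, b))"
    using sub_prod[OF E A Ecol, where \<sigma>="\<lambda>x. x" and s=k and S="{..<k}" and T="{}" and s'=k and \<tau>="\<lambda>x. x"] km kn by (auto simp: bij_betw_def)
  finally have "1\<^sub>m k = mat k k (\<lambda>(a,c). E $$ (a, c)) * submatrix A {0..<k} {0..<k}"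
    using sub_K[of k B] sub_K[of k A] Bc A km kn BK by simp
  then have "det (1\<^sub>m k :: real mat) = d * lead_minor A k"
    unfolding d_def lead_minor_def minor_def
    by (metis det_mult mat_carrier sub_K[of k A] A km kn carrier_matD)
  then show "d * lead_minor A k = 1" by simp
  fix i j assume i: "k \<le> i" "i < m" and j: "k \<le> j" "j < n"
  let ?P = "mat (Suc k) (Suc k) (\<lambda>(a,c). E $$ (sg k i a, sg k i c))"
  let ?Q = "mat (Suc k) (Suc k) (\<lambda>(a,b). B $$ (sg k i a, sg k j b))"
  let ?R = "mat (Suc k) (Suc k) (\<lambda>(c,b). A $$ (sg k i c, sg k j b))"
  have sgi: "sg k i a < m" if "a < Suc k" for a using that i km unfolding sg_def by auto
  have sgj: "sg k j b < n" if "b < Suc k" for b using that j kn unfolding sg_def by auto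
  have QPR: "?Q = ?P * ?R"
    unfolding BE by (rule sub_prod[OF E A Ecol bij_sg[OF i(1)], where T="{i}"]) (use i km sgj in auto)
  have subB: "submatrix B ({0..<k} \<union> {i}) ({0..<k} \<union> {j}) = ?Q"
    using sub_S[of k i B j] i j Bc by simp
  have subA: "submatrix A ({0..<k} \<union> {i}) ({0..<k} \<union> {j}) = ?R"
    using sub_S[of k i A j] i j A by simp
  have detP: "det ?P = d"
  proof -
    have "det ?P = ?P $$ (k,k) * det (mat k k (\<lambda>(a,b). ?P $$ (a,b)))"
      by (rule det_lastcol) (use Ecol i km in \<open>auto simp: sg_def\<close>)
    also have "mat k k (\<lambda>(a,b). ?P $$ (a,b)) = mat k k (\<lambda>(a,b). E $$ (a,b))"
      by (rule eq_matI) (auto simp: sg_def)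
    also have "?P $$ (k,k) = 1" using Ecol[of i i] i by (simp add: sg_def)
    finally show ?thesis unfolding d_def by simp
  qed
  have detQ: "det ?Q = B $$ (i,j)"
  proof -
    have "det ?Q = ?Q $$ (k,k) * det (mat k k (\<lambda>(a,b). ?Q $$ (a,b)))"
      by (rule det_lastrow) (use Bcol i in \<open>auto simp: sg_def\<close>)
    also have "mat k k (\<lambda>(a,b). ?Q $$ (a,b)) = mat k k (\<lambda>(a,b). B $$ (a,b))"
      by (rule eq_matI) (auto simp: sg_def)
    also have "?Q $$ (k,k) = B $$ (i,j)" by (simp add: sg_def)
    finally show ?thesis using BK by simp
  qed
  have "B $$ (i,j) = d * det ?R"
    using detQ detP QPR det_mult[of ?P "Suc k" ?R] by simp
  then show "gj A (2*k) $$ (i,j) = d * minor A ({0..<k} \<union> {i}) ({0..<k} \<union> {j})"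
    unfolding B_def minor_def subA by simp
qed



lemma rank_sum_le:
  fixes f g :: "nat \<Rightarrow> nat \<Rightarrow> real"
  shows "A \<in> carrier_mat m n \<Longrightarrow> (\<And>r c. r < m \<Longrightarrow> c < n \<Longrightarrow> A $$ (r,c) = (\<Sum>l<p. f l r * g l c))
    \<Longrightarrow> vec_space.rank m A \<le> p"
proof (induction p arbitrary: A)
  case 0
  then have "A = 0\<^sub>m m n" by (intro eq_matI) auto
  then show ?case using vec_space.rank_0I by simp
next
  case (Suc p)
  define A1 where "A1 = mat m n (\<lambda>(r,c). \<Sum>l<p. f l r * g l c)"
  define A2 where "A2 = mat m n (\<lambda>(r,c). f p r * g p c)"
  have c1: "A1 \<in> carrier_mat m n" and c2: "A2 \<in> carrier_mat m n" unfolding A1_def A2_def by auto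
  have "A = A1 + A2" using Suc.prems unfolding A1_def A2_def by (intro eq_matI) auto
  moreover have "vec_space.rank m A1 \<le> p" by (rule Suc.IH[OF c1]) (simp add: A1_def)
  moreover have "vec_space.rank m A2 \<le> 1"
    by (rule vec_space.rank_le_1_product_entries[OF c2]) (use c2 in \<open>auto simp: A2_def\<close>)
  moreover have "vec_space.rank m (A1 + A2) \<le> vec_space.rank m A1 + vec_space.rank m A2"
    by (rule vec_space.rank_subadditive[OF c1 c2])
  ultimately show ?case by simp
qed



lemma minor_1:
  assumes "A \<in> carrier_mat m n" "i < m" "j < n"
  shows "minor A ({0..<0} \<union> {i}) ({0..<0} \<union> {j}) = A $$ (i,j)"
proof -
  have "minor A ({0..<0} \<union> {i}) ({0..<0} \<union> {j}) = det (mat (Suc 0) (Suc 0) (\<lambda>(a,b). A $$ (sg 0 i a, sg 0 j b)))"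
    unfolding minor_def using sub_S[of 0 i A j] assms by simp
  also have "\<dots> = A $$ (i,j)"
    by (subst det_lastcol[where k=0]) (auto simp: sg_def)
  finally show ?thesis .
qed

lemma PA_bound:
  assumes PA: "properly_arranged A" and A: "A \<in> carrier_mat m n"
    and km: "k < m" and kn: "k < n" and i: "k \<le> i" "i < m" and j: "k \<le> j" "j < n"
  shows "\<bar>minor A ({0..<k} \<union> {i}) ({0..<k} \<union> {j})\<bar> \<le> \<bar>lead_minor A (Suc k)\<bar>"
proof (cases "k = 0")
  case True
  have "lead_minor A (Suc k) = A $$ (0,0)"
    using minor_1[OF A, of 0 0] km kn True unfolding lead_minor_def by simp
  moreover have "minor A ({0..<k} \<union> {i}) ({0..<k} \<union> {j}) = A $$ (i,j)"
    using minor_1[OF A i(2) j(2)] True by simp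
  ultimately show ?thesis using PA A i j unfolding properly_arranged_def by auto
next
  case False
  then show ?thesis using PA A km kn i j unfolding properly_arranged_def by auto
qed



lemma sum_delta_l: "finite S \<Longrightarrow> (\<Sum>l\<in>S. (if l = r then 1 else 0) * (x l :: real)) = (if r \<in> S then x r else 0)"
proof -
  have "(\<Sum>l\<in>S. (if l = r then 1 else 0) * x l) = (\<Sum>l\<in>S. if l = r then x l else 0)" by (rule sum.cong) auto
  moreover assume "finite S"
  ultimately show ?thesis by simp
qed

lemma sum_delta_r: "finite S \<Longrightarrow> (\<Sum>l\<in>S. (x l :: real) * (if l = r then 1 else 0)) = (if r \<in> S then x r else 0)"
proof -
  have "(\<Sum>l\<in>S. x l * (if l = r then 1 else 0)) = (\<Sum>l\<in>S. if l = r then x l else 0)" by (rule sum.cong) auto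
  moreover assume "finite S"
  ultimately show ?thesis by simp
qed

lemma degenerate_rank:
  assumes A: "A \<in> carrier_mat m n" and inv: "inv_E A m k E" and km: "k \<le> m"
    and z: "\<And>i j. k \<le> i \<Longrightarrow> i < m \<Longrightarrow> j < n \<Longrightarrow> gj A (2*k) $$ (i,j) = 0"
  shows "mrank A \<le> k"
proof -
  have E: "E \<in> carrier_mat m m" and BE: "gj A (2*k) = E * A"
    and Ecol: "\<And>i l. i < m \<Longrightarrow> l < m \<Longrightarrow> k \<le> l \<Longrightarrow> E $$ (i,l) = (if i = l then 1 else 0)"
    using inv unfolding inv_E_def by auto
  define f where "f = (\<lambda>l r. if r < k then (if l = r then 1 else 0) else - E $$ (r,l) :: real)"
  have "A $$ (r,c) = (\<Sum>l<k. f l r * A $$ (l,c))" if r: "r < m" and c: "c < n" for r c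
  proof (cases "r < k")
    case True
    then show ?thesis unfolding f_def by (simp add: sum_delta_l)
  next
    case False
    have "0 = (E * A) $$ (r,c)" using z[of r c] False r c BE by simp
    also have "\<dots> = (\<Sum>l\<in>{0..<m}. E $$ (r,l) * A $$ (l,c))"
      using E A r c by (simp add: scalar_prod_def)
    also have "\<dots> = (\<Sum>l\<in>{0..<k}. E $$ (r,l) * A $$ (l,c)) + (\<Sum>l\<in>{k..<m}. E $$ (r,l) * A $$ (l,c))"
      using km by (metis (no_types) le0 sum.atLeastLessThan_concat)
    also have "(\<Sum>l\<in>{k..<m}. E $$ (r,l) * A $$ (l,c)) = (\<Sum>l\<in>{k..<m}. if l = r then A $$ (l,c) else 0)"
      by (rule sum.cong) (use Ecol r in auto)
    also have "\<dots> = A $$ (r,c)" using False r by simp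
    finally have "A $$ (r,c) = - (\<Sum>l\<in>{0..<k}. E $$ (r,l) * A $$ (l,c))" by linarith
    also have "\<dots> = (\<Sum>l<k. f l r * A $$ (l,c))"
      unfolding f_def using False by (simp add: lessThan_atLeast0 sum_negf)
    finally show ?thesis .
  qed
  then have "vec_space.rank m A \<le> k"
    using rank_sum_le[OF A, where p=k and f=f and g="\<lambda>l c. A $$ (l,c)"] by blast
  then show ?thesis unfolding mrank_def using A by simp
qed

theorem theorem2p11:
  fixes A :: "real mat" and m n r :: nat
  assumes "A \<in> carrier_mat m n"
    and "mrank A = r" and "r \<ge> 1"
    and "properly_arranged A"
  shows "diag_eliminable A r \<and>
    (\<forall>k<r. \<forall>i j. k \<le> i \<and> i < m \<and> k \<le> j \<and> j < n \<longrightarrow>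
        \<bar>gj A (2*k) $$ (k,k)\<bar> \<ge> \<bar>gj A (2*k) $$ (i,j)\<bar>)"
proof -
  note A = assms(1) and PA = assms(4)
  have rm: "r \<le> m"
  proof -
    have "vec_space.rank m A \<le> m"
      by (rule rank_sum_le[OF A, where p=m and f="\<lambda>l r. if l = r then 1 else 0" and g="\<lambda>l c. A $$ (l,c)"])
         (simp add: sum_delta_l)
    then show ?thesis using assms(2) A unfolding mrank_def by simp
  qed
  have rn: "r \<le> n"
  proof -
    have "vec_space.rank m A \<le> n"
      by (rule rank_sum_le[OF A, where p=n and f="\<lambda>l r. A $$ (r,l)" and g="\<lambda>l c. if l = c then 1 else 0"])
         (simp add: sum_delta_r)
    then show ?thesis using assms(2) A unfolding mrank_def by simp
  qed
  have key: "\<exists>E. inv_E A m k E \<and> det (mat k k (\<lambda>(a,b). E $$ (a,b))) \<noteq> 0 \<and>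
     (\<forall>i j. k \<le> i \<and> i < m \<and> k \<le> j \<and> j < n \<longrightarrow>
       gj A (2*k) $$ (i,j) = det (mat k k (\<lambda>(a,b). E $$ (a,b))) * minor A ({0..<k} \<union> {i}) ({0..<k} \<union> {j}))"
    if kr0: "k \<le> r" and pv: "\<forall>t<k. gj A (2*t) $$ (t,t) \<noteq> 0" for k
  proof -
    obtain E where E: "inv_E A m k E" using inv_E_exists[OF A, of k] kr0 pv rm rn by auto
    show ?thesis using minor_facts[OF A E] kr0 rm rn E by (intro exI[of _ E]) auto
  qed
  have piv: "\<forall>t<k. gj A (2*t) $$ (t,t) \<noteq> 0" if "k \<le> r" for k
    using that
  proof (induction k)
    case 0
    then show ?case by simp
  next
    case (Suc k)
    then have IH: "\<forall>t<k. gj A (2*t) $$ (t,t) \<noteq> 0" and kr: "k < r" by auto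
    obtain E where E: "inv_E A m k E" and d: "det (mat k k (\<lambda>(a,b). E $$ (a,b))) \<noteq> 0"
      and B: "\<And>i j. k \<le> i \<Longrightarrow> i < m \<Longrightarrow> k \<le> j \<Longrightarrow> j < n \<Longrightarrow>
       gj A (2*k) $$ (i,j) = det (mat k k (\<lambda>(a,b). E $$ (a,b))) * minor A ({0..<k} \<union> {i}) ({0..<k} \<union> {j})"
      using key[of k] IH kr by auto
    have "gj A (2*k) $$ (k,k) \<noteq> 0"
    proof
      assume p0: "gj A (2*k) $$ (k,k) = 0"
      have "{0..<k} \<union> {k} = {0..<Suc k}" by auto
      then have "lead_minor A (Suc k) = 0"
        using B[of k k] p0 d kr rm rn unfolding lead_minor_def by simp
      then have mz: "minor A ({0..<k} \<union> {i}) ({0..<k} \<union> {j}) = 0"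
        if "k \<le> i" "i < m" "k \<le> j" "j < n" for i j
        using PA_bound[OF PA A, of k i j] that kr rm rn by simp
      then have z: "gj A (2*k) $$ (i,j) = 0" if "k \<le> i" "i < m" "j < n" for i j
      proof (cases "j < k")
        case True
        then show ?thesis using E that unfolding inv_E_def by auto
      next
        case False
        then show ?thesis using B[of i j] that mz[of i j] by simp
      qed
      have "mrank A \<le> k" using degenerate_rank[OF A E _ z] kr rm by simp
      then show False using assms(2) kr by simp
    qed
    then show ?case using IH less_Suc_eq by auto
  qed
  have de: "diag_eliminable A r"
    unfolding diag_eliminable_def
  proof
    fix k assume k: "k \<in> {1..r}"
    then have "2*k - 2 = 2*(k-1)" "k - 1 < r" by auto
    then show "gj A (2*k - 2) $$ (k - 1, k - 1) \<noteq> 0" using piv[of r] by simp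
  qed
  have bd: "\<bar>gj A (2*k) $$ (k,k)\<bar> \<ge> \<bar>gj A (2*k) $$ (i,j)\<bar>"
    if kr: "k < r" and ij: "k \<le> i" "i < m" "k \<le> j" "j < n" for k i j
  proof -
    obtain E where B: "\<And>i j. k \<le> i \<Longrightarrow> i < m \<Longrightarrow> k \<le> j \<Longrightarrow> j < n \<Longrightarrow>
       gj A (2*k) $$ (i,j) = det (mat k k (\<lambda>(a,b). E $$ (a,b))) * minor A ({0..<k} \<union> {i}) ({0..<k} \<union> {j})"
      using key[of k] piv[of r] kr by auto
    have "{0..<k} \<union> {k} = {0..<Suc k}" by auto
    then have kk: "gj A (2*k) $$ (k,k) = det (mat k k (\<lambda>(a,b). E $$ (a,b))) * lead_minor A (Suc k)"
      using B[of k k] kr rm rn unfolding lead_minor_def by simp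
    have "\<bar>minor A ({0..<k} \<union> {i}) ({0..<k} \<union> {j})\<bar> \<le> \<bar>lead_minor A (Suc k)\<bar>"
      using PA_bound[OF PA A, of k i j] ij kr rm rn by simp
    then show ?thesis unfolding kk B[OF ij] abs_mult by (simp add: mult_left_mono)
  qed
  show ?thesis using de bd by blast
qed


end
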